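(* Let $S$ be a numerical semigroup with minimal generators $a_1<a_2<\cdots<a_\nu$ ($\nu\ge2$), multiplicity $\mu=a_1$ and conductor $c$, and suppose $a_2>\frac{c+\mu}{3}$. Let $P=\{a_1,\dots,a_\nu\}$, $q_1=|\{a\in P\setminus\{\mu\}: \tfrac13(c+\mu)<a<\tfrac12(c+\mu)\}|$ and $q_2=|\{a\in P\setminus\{\mu\}: \tfrac12(c+\mu)\le a<\tfrac23(c+\mu)\}|$. Then: (a) $\mu\le \nu+\frac{q_1(q_1+1)}{2}+q_1q_2$; (b) $\mu\le\frac12\nu(\nu+1)$; (c) $q_1\ge \frac{2\nu-1-\sqrt{(2\nu+1)^2-8\mu}}{2}$.
   Context: A numerical semigroup is a submonoid $S\subseteq\mathbb{N}$ with finite complement. The minimal generating set has cardinality $\nu$ (embedding dimension); its smallest element $\mu$ is the multiplicity. The conductor $c$ is the least integer with $c+\mathbb{N}\subseteq S$. *)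

theory Defs
  imports Complex_Main
begin

definition numerical_semigroup :: "nat set \<Rightarrow> bool" where
  "numerical_semigroup S \<longleftrightarrow> 0 \<in> S \<and> (\<forall>x\<in>S. \<forall>y\<in>S. x + y \<in> S) \<and> finite (UNIV - S)"

inductive_set monoid_gen :: "nat set \<Rightarrow> nat set" for A :: "nat set" where
  zero: "0 \<in> monoid_gen A"
| add: "a \<in> A \<Longrightarrow> x \<in> monoid_gen A \<Longrightarrow> a + x \<in> monoid_gen A"

definition minimal_generating_set :: "nat set \<Rightarrow> nat set \<Rightarrow> bool" where
  "minimal_generating_set A S \<longleftrightarrow> monoid_gen A = S \<and> (\<forall>B. B \<subset> A \<longrightarrow> monoid_gen B \<noteq> S)"

definition conductor :: "nat set \<Rightarrow> nat" where
  "conductor S = (LEAST c. \<forall>n. c + n \<in> S)"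

end

theory Submission
  imports Defs
begin

lemma mg_avoid:
  assumes "x \<in> monoid_gen P"
  shows "(\<mu> \<le> x \<Longrightarrow> x - \<mu> \<notin> monoid_gen P) \<Longrightarrow> x \<in> monoid_gen (P - {\<mu>})"
  using assms
proof (induction x rule: monoid_gen.induct)
  case zero
  then show ?case by (simp add: monoid_gen.zero)
next
  case (add a y)
  show ?case
  proof (cases "a = \<mu>")
    case True
    then show ?thesis using add by simp
  next
    case False
    have "y \<in> monoid_gen (P - {\<mu>})"
    proof (rule add.IH)
      assume h: "\<mu> \<le> y"
      show "y - \<mu> \<notin> monoid_gen P"
      proof
        assume "y - \<mu> \<in> monoid_gen P"
        then have "a + (y - \<mu>) \<in> monoid_gen P" using add.hyps by (simp add: monoid_gen.add)
        moreover have "a + (y - \<mu>) = a + y - \<mu>" using h by simp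
        ultimately show False using add.prems h by simp
      qed
    qed
    then show ?thesis using False add.hyps by (simp add: monoid_gen.add)
  qed
qed

lemma mg_struct:
  assumes "x \<in> monoid_gen A" "\<forall>a\<in>A. K < 3*a" "x < (K::nat)"
  shows "x = 0 \<or> x \<in> A \<or> (\<exists>a\<in>A. \<exists>b\<in>A. x = a + b)"
proof (cases "x = 0")
  case False
  then obtain a y where a: "a \<in> A" "y \<in> monoid_gen A" "x = a + y"
    using assms(1) by (blast elim: monoid_gen.cases)
  show ?thesis
  proof (cases "y = 0")
    case True then show ?thesis using a by simp
  next
    case False
    then obtain b z where b: "b \<in> A" "z \<in> monoid_gen A" "y = b + z"
      using a(2) by (blast elim: monoid_gen.cases)
    show ?thesis
    proof (cases "z = 0")
      case True then show ?thesis using a b by auto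
    next
      case False
      then obtain d w where d: "d \<in> A" "z = d + w"
        using b(2) by (blast elim: monoid_gen.cases)
      have "K < 3*a" "K < 3*b" "K < 3*d" using a b d assms(2) by auto
      moreover have "x = a + b + d + w" using a b d by simp
      ultimately show ?thesis using assms(3) by linarith
    qed
  qed
qed simp

lemma pair_count:
  assumes "finite (X::nat set)"
  shows "2 * card {(a,b). a \<in> X \<and> b \<in> X \<and> a \<le> b} = card X * (card X + 1)"
proof -
  define L where "L = {(a,b). a \<in> X \<and> b \<in> X \<and> a \<le> b}"
  define L' where "L' = {(a,b). a \<in> X \<and> b \<in> X \<and> b \<le> a}"
  have fin: "finite L" "finite L'"
    unfolding L_def L'_def by (auto intro: finite_subset[of _ "X \<times> X"] simp: assms)
  have U: "L \<union> L' = X \<times> X" unfolding L_def L'_def by auto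
  have I: "L \<inter> L' = (\<lambda>a. (a,a)) ` X" unfolding L_def L'_def by auto
  have "bij_betw (\<lambda>(a,b). (b,a)) L L'"
    unfolding L_def L'_def by (auto simp: bij_betw_def inj_on_def image_def)
  then have "card L' = card L" by (simp add: bij_betw_same_card)
  moreover have "card L + card L' = card (L \<union> L') + card (L \<inter> L')"
    using card_Un_Int fin by blast
  moreover have "card ((\<lambda>a. (a,a)) ` X) = card X" by (simp add: card_image inj_on_def)
  ultimately show ?thesis unfolding L_def[symmetric] using U I
    by (simp add: card_cartesian_product)
qed

lemma linB: fixes E X Z Y x y m :: real
  shows "0 \<le> E \<Longrightarrow> E = X - 2*Z + Y - x + y \<Longrightarrow> 2*m \<le> 2*x + 2*Z - Y - y \<Longrightarrow> m \<le> (X + x)/2"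
  by argo
lemma aux_B: fixes x y m :: real
  assumes "0 \<le> (x - y)*(x-y-1)" "2*m \<le> 2*x + 2*x*y - y^2 - y"
  shows "m \<le> x*(x+1)/2"
proof -
  have e: "(x - y)*(x-y-1) = x*x - 2*(x*y) + y^2 - x + y" by (simp add: algebra_simps power2_eq_square)
  have "x*(x+1) = x*x + x" by (simp add: algebra_simps)
  moreover have "2*x*y = 2*(x*y)" by simp
  ultimately show ?thesis using linB[OF assms(1) e] assms(2) by simp
qed
lemma linA: fixes P Q W x y m :: real shows "P \<le> Q - y - W \<Longrightarrow> m \<le> x + (W + y)/2 + P \<Longrightarrow> 2*m \<le> 2*x + 2*Q - W - y" by argo
lemma aux_A2: fixes x y z m :: real
  assumes "y * z \<le> y * (x - 1 - y)" "m \<le> x + y * (y + 1) / 2 + y * z"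
  shows "2*m \<le> 2*x + 2*x*y - y^2 - y"
proof -
  have e: "y * (x - 1 - y) = x*y - y - y^2" "y*(y+1) = y^2 + y"
    by (simp_all add: algebra_simps power2_eq_square)
  have h1: "y*z \<le> x*y - y - y^2" using assms(1) e by simp
  have h2: "m \<le> x + (y^2 + y)/2 + y*z" using assms(2) e by simp
  have "2*m \<le> 2*x + 2*(x*y) - y^2 - y" by (rule linA[OF h1 h2])
  then show ?thesis by (simp add: mult.assoc)
qed
lemma linC: fixes X Z W x y m :: real shows "2*m \<le> 2*x + 2*Z - W - y \<Longrightarrow> 4*X - 4*x + 1 - 8*Z + 4*y + 4*W \<le> 4*X + 4*x + 1 - 8*m" by argo
lemma aux_C: fixes x y m :: real
  assumes "2*m \<le> 2*x + 2*x*y - y^2 - y"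
  shows "(2*x - 1 - 2*y)^2 \<le> (2*x+1)^2 - 8*m"
proof -
  have "(2*x - 1 - 2*y)^2 = 4*(x*x) - 4*x + 1 - 8*(x*y) + 4*y + 4*y^2"
       "(2*x+1)^2 = 4*(x*x) + 4*x + 1" "2*x*y = 2*(x*y)"
    by (simp_all add: algebra_simps power2_eq_square)
  then show ?thesis using linC[of m x "x*y" "y^2" y "x*x"] assms by simp
qed

theorem proposition2p2:
  fixes S P :: "nat set" and \<nu> \<mu> c a2 q1 q2 :: nat
  assumes "numerical_semigroup S"
    and "minimal_generating_set P S"
    and "\<nu> = card P"
    and "\<nu> \<ge> 2"
    and "\<mu> = Min P"
    and "c = conductor S"
    and "a2 = Min (P - {\<mu>})"
    and "real a2 > (real c + real \<mu>) / 3"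
    and "q1 = card {a \<in> P - {\<mu>}. (real c + real \<mu>) / 3 < real a \<and> real a < (real c + real \<mu>) / 2}"
    and "q2 = card {a \<in> P - {\<mu>}. (real c + real \<mu>) / 2 \<le> real a \<and> real a < 2 * (real c + real \<mu>) / 3}"
  shows "real \<mu> \<le> real \<nu> + real q1 * (real q1 + 1) / 2 + real q1 * real q2 \<and>
         real \<mu> \<le> real \<nu> * (real \<nu> + 1) / 2 \<and>
         real q1 \<ge> (2 * real \<nu> - 1 - sqrt ((2 * real \<nu> + 1)^2 - 8 * real \<mu>)) / 2"
proof -
  define K where "K = c + \<mu>"
  have finP: "finite P" using assms(3,4) card.infinite by fastforce
  have PnE: "P \<noteq> {}" using assms(3,4) by auto
  have muP: "\<mu> \<in> P" using assms(5) finP PnE by simp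
  have cardP1: "card (P - {\<mu>}) = \<nu> - 1" using muP finP assms(3) by simp
  have finP1: "finite (P - {\<mu>})" using finP by simp
  have P1nE: "P - {\<mu>} \<noteq> {}"
  proof
    assume "P - {\<mu>} = {}"
    then have "card (P - {\<mu>}) = 0" by (simp only: card.empty)
    with cardP1 assms(4) show False by simp
  qed
  have SP: "S = monoid_gen P" using assms(2) unfolding minimal_generating_set_def by simp
  have big: "\<forall>a\<in>P - {\<mu>}. K < 3*a"
  proof
    fix a assume "a \<in> P - {\<mu>}"
    then have "a2 \<le> a" using assms(7) finP1 by simp
    then have "real K < 3 * real a" using assms(8) unfolding K_def by simp
    then show "K < 3*a" by linarith
  qed
  have "finite (UNIV - S)" using assms(1) unfolding numerical_semigroup_def by simp
  then obtain N where N: "\<forall>x\<in>UNIV - S. x < N" using finite_nat_set_iff_bounded by blast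
  have "\<forall>n. N + n \<in> S" using N by fastforce
  then have cond: "\<forall>n. c + n \<in> S" unfolding assms(6) conductor_def by (rule LeastI)
  have condS: "x \<in> S" if "c \<le> x" for x using cond[rule_format, of "x - c"] that by simp
  define Q1 where "Q1 = {a \<in> P - {\<mu>}. K < 3*a \<and> 2*a < K}"
  define Q2 where "Q2 = {a \<in> P - {\<mu>}. K \<le> 2*a \<and> 3*a < 2*K}"
  have q1: "q1 = card Q1" unfolding assms(9) Q1_def K_def
    by (rule arg_cong[where f=card]) (auto simp: field_simps)
  have q2: "q2 = card Q2" unfolding assms(10) Q2_def K_def
    by (rule arg_cong[where f=card]) (auto simp: field_simps)
  have Q12: "Q1 \<inter> Q2 = {}" unfolding Q1_def Q2_def by auto
  have finQ: "finite Q1" "finite Q2" unfolding Q1_def Q2_def using finP by auto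
  have q12: "q1 + q2 \<le> \<nu> - 1"
  proof -
    have "q1 + q2 = card (Q1 \<union> Q2)" using q1 q2 Q12 finQ by (simp add: card_Un_disjoint)
    also have "\<dots> \<le> card (P - {\<mu>})" by (rule card_mono[OF finP1]) (auto simp: Q1_def Q2_def)
    finally show ?thesis using cardP1 by simp
  qed
  define L1 where "L1 = {(a,b). a \<in> Q1 \<and> b \<in> Q1 \<and> a \<le> b}"
  define Pr where "Pr = L1 \<union> Q1 \<times> Q2"
  define T where "T = insert 0 ((P - {\<mu>}) \<union> (\<lambda>(a,b). a + b) ` Pr)"
  have finL1: "finite L1" unfolding L1_def by (rule finite_subset[of _ "Q1 \<times> Q1"]) (auto simp: finQ)
  have L1card: "2 * card L1 = q1 * (q1 + 1)" unfolding L1_def q1 by (rule pair_count[OF finQ(1)])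
  have Prcard: "card Pr = card L1 + q1 * q2"
  proof -
    have "L1 \<inter> Q1 \<times> Q2 = {}" using Q12 unfolding L1_def by auto
    then show ?thesis unfolding Pr_def using finL1 finQ q1 q2
      by (simp add: card_Un_disjoint card_cartesian_product)
  qed
  have finT: "finite T" unfolding T_def Pr_def using finP1 finL1 finQ by simp
  have cardT: "card T \<le> 1 + (\<nu> - 1) + card Pr"
  proof -
    have "card T \<le> Suc (card ((P - {\<mu>}) \<union> (\<lambda>(a,b). a + b) ` Pr))"
      unfolding T_def by (rule card_insert_le_m1) simp_all
    also have "card ((P - {\<mu>}) \<union> (\<lambda>(a,b). a + b) ` Pr) \<le> card (P - {\<mu>}) + card ((\<lambda>(a,b). a + b) ` Pr)"
      by (rule card_Un_le)
    also have "card ((\<lambda>(a,b). a + b) ` Pr) \<le> card Pr" by (rule card_image_le) (simp add: Pr_def finL1 finQ)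
    finally show ?thesis using cardP1 by simp
  qed
  define w where "w r = (LEAST x. x \<in> S \<and> x mod \<mu> = r)" for r
  have wT: "w r \<in> T \<and> w r mod \<mu> = r" if r: "r < \<mu>" for r
  proof -
    have "\<mu> * c + r \<in> S" using r by (intro condS) (cases \<mu>; simp)
    moreover have "(\<mu> * c + r) mod \<mu> = r" using r by simp
    ultimately have ex: "\<exists>x. x \<in> S \<and> x mod \<mu> = r" by blast
    have wS: "w r \<in> S" and wm: "w r mod \<mu> = r" using LeastI_ex[OF ex] unfolding w_def by auto
    have wmin: "w r \<le> y" if "y \<in> S" "y mod \<mu> = r" for y
      unfolding w_def by (rule Least_le) (use that in simp)
    have nsub: "w r - \<mu> \<notin> S" if "\<mu> \<le> w r"
    proof
      assume "w r - \<mu> \<in> S"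
      moreover have "(w r - \<mu>) mod \<mu> = r" using that wm le_mod_geq by simp
      ultimately have "w r \<le> w r - \<mu>" by (rule wmin)
      then show False using that r by linarith
    qed
    have wK: "w r < K"
    proof (rule ccontr)
      assume "\<not> w r < K"
      then have "\<mu> \<le> w r" "c \<le> w r - \<mu>" unfolding K_def by auto
      then show False using nsub condS by blast
    qed
    have wP1: "w r \<in> monoid_gen (P - {\<mu>})"
      using mg_avoid[of "w r" P \<mu>] wS nsub SP by auto
    from mg_struct[OF wP1 big wK]
    have "w r \<in> T"
    proof (elim disjE bexE)
      fix a b assume ab: "a \<in> P - {\<mu>}" "b \<in> P - {\<mu>}" "w r = a + b"
      define a' b' where "a' = min a b" and "b' = max a b"
      have "w r = a' + b'" unfolding a'_def b'_def using ab by simp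
      moreover have "a' \<in> P - {\<mu>}" "b' \<in> P - {\<mu>}" "a' \<le> b'"
        unfolding a'_def b'_def using ab by (auto simp: min_def max_def)
      moreover have "K < 3*a'" "K < 3*b'" using big calculation by auto
      ultimately have "a' \<in> Q1" "b' \<in> Q1 \<or> b' \<in> Q2" "a' \<le> b'" "w r = a' + b'"
        using wK unfolding Q1_def Q2_def by auto
      then have "(a', b') \<in> Pr" unfolding Pr_def L1_def by auto
      then show ?thesis unfolding T_def using \<open>w r = a' + b'\<close> by force
    qed (auto simp: T_def)
    then show ?thesis using wm by simp
  qed
  have "inj_on w {..<\<mu>}" by (rule inj_onI) (metis lessThan_iff wT)
  then have "card {..<\<mu>} \<le> card T" by (rule card_inj_on_le) (use wT finT in auto)
  then have mu_le: "\<mu> \<le> 1 + (\<nu> - 1) + card L1 + q1 * q2" using cardT Prcard by simp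
  have rq: "real q1 + real q2 \<le> real \<nu> - 1" using q12 assms(4) by linarith
  have A: "real \<mu> \<le> real \<nu> + real q1 * (real q1 + 1) / 2 + real q1 * real q2"
  proof -
    have "real (2 * card L1) = real q1 * (real q1 + 1)" using L1card by (simp add: algebra_simps)
    then have "real (card L1) = real q1 * (real q1 + 1) / 2" by simp
    moreover have "real \<mu> \<le> 1 + (real \<nu> - 1) + real (card L1) + real q1 * real q2"
      proof -
        have "\<mu> \<le> \<nu> + card L1 + q1 * q2" using mu_le assms(4) by simp
        then have "real \<mu> \<le> real (\<nu> + card L1 + q1 * q2)" by (simp only: of_nat_le_iff)
        then show ?thesis by simp
      qed
    ultimately show ?thesis by simp
  qed
  have A2: "2 * real \<mu> \<le> 2 * real \<nu> + 2 * real \<nu> * real q1 - real q1 ^ 2 - real q1"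
  proof -
    have "real q1 * real q2 \<le> real q1 * (real \<nu> - 1 - real q1)"
      using rq by (intro mult_left_mono) auto
    then show ?thesis using A by (rule aux_A2)
  qed
  have B: "real \<mu> \<le> real \<nu> * (real \<nu> + 1) / 2"
  proof -
    have "0 \<le> (real \<nu> - real q1) * (real \<nu> - real q1 - 1)"
      using rq by (intro mult_nonneg_nonneg) auto
    then show ?thesis using A2 by (rule aux_B)
  qed
  have D: "(2 * real \<nu> - 1 - 2 * real q1)^2 \<le> (2 * real \<nu> + 1)^2 - 8 * real \<mu>"
    using A2 by (rule aux_C)
  have C: "real q1 \<ge> (2 * real \<nu> - 1 - sqrt ((2 * real \<nu> + 1)^2 - 8 * real \<mu>)) / 2"
  proof -
    have "2 * real \<nu> - 1 - 2 * real q1 \<le> sqrt ((2 * real \<nu> + 1)^2 - 8 * real \<mu>)"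
      using D by (rule real_le_rsqrt)
    then show ?thesis by simp
  qed
  show ?thesis using A B C by blast
qed

end
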